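(* Let $\{x_i,v_i\}_{i\in[N]}$ be the global solution of the delayed Cucker–Smale system described in the context, let $\beta>0$ and \[ G(t):=d_v(t)+\beta\int_{\max\{0,t-2\tau\}}^t e^{-(t-s)}\int_s^t\max_{i\in[N]}|\dot v_i(r)|\,\mathrm dr\,\mathrm ds,\qquad t\ge0. \] Then for all $i,j\in[N]$ and $t\ge2\tau$, \[ |v_j(t-\tau)-v_i(t-\sigma)|\le d_v(t-\tau)+\int_{t-\tau}^{t-\sigma}d_v(s-\tau)\,\mathrm ds+\beta^{-1}e^{2\tau}G(t-\sigma). \]
   Context: Let $N\ge2$, $d\ge1$ be integers, $[N]=\{1,\dots,N\}$, $0\le\sigma\le\tau$. Let $\psi:[0,\infty)\to[0,\infty)$ be continuous, nonincreasing, positive everywhere, with $\sup\psi\le1$. Given $x_i^0\in C^1([-\tau,0],\mathbb{R}^d)$, $v_i^0\in C([-\tau,0],\mathbb{R}^d)$ with $\frac{\mathrm d}{\mathrm dt}x_i^0=v_i^0$, $\{x_i,v_i\}$ is the global solution of $\dot x_i(t)=v_i(t)$, $\dot v_i(t)=\sum_{j\ne i}a_{ij}(t)(v_j(t-\tau)-v_i(t-\sigma))$ for $t>0$, with $a_{ij}(t)=\frac1{N-1}\psi(|x_i(t-\sigma)-x_j(t-\tau)|)$, and $x_i=x_i^0$, $v_i=v_i^0$ on $[-\tau,0]$ ($v_i$ continuously differentiable on $[0,\infty)$). $d_v(t):=\max_{i,j}|v_i(t)-v_j(t)|$. *)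

theory Defs
  imports "HOL-Analysis.Analysis"
begin

definition cs_weight ::
  "nat \<Rightarrow> (real \<Rightarrow> real) \<Rightarrow> real \<Rightarrow> real \<Rightarrow> (nat \<Rightarrow> real \<Rightarrow> real^'d) \<Rightarrow> nat \<Rightarrow> nat \<Rightarrow> real \<Rightarrow> real"
  where "cs_weight N \<psi> \<sigma> \<tau> x i j t = (1 / (real N - 1)) * \<psi> (norm (x i (t - \<sigma>) - x j (t - \<tau>)))"

definition cs_global_solution ::
  "nat \<Rightarrow> real \<Rightarrow> real \<Rightarrow> (real \<Rightarrow> real) \<Rightarrow> (nat \<Rightarrow> real \<Rightarrow> real^'d) \<Rightarrow> (nat \<Rightarrow> real \<Rightarrow> real^'d) \<Rightarrow> bool"
  where "cs_global_solution N \<sigma> \<tau> \<psi> x v \<longleftrightarrow>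
    (\<forall>i\<in>{1..N}. continuous_on {-\<tau>..} (v i)) \<and>
    (\<forall>i\<in>{1..N}. \<forall>t\<ge>-\<tau>. (x i has_vector_derivative v i t) (at t within {-\<tau>..})) \<and>
    (\<forall>i\<in>{1..N}. \<exists>v'. continuous_on {0..} v' \<and>
        (\<forall>t\<ge>0. (v i has_vector_derivative v' t) (at t within {0..}))) \<and>
    (\<forall>i\<in>{1..N}. \<forall>t>0. (v i has_vector_derivative
        (\<Sum>j\<in>{1..N} - {i}. cs_weight N \<psi> \<sigma> \<tau> x i j t *\<^sub>R (v j (t - \<tau>) - v i (t - \<sigma>)))) (at t))"

definition dv :: "nat \<Rightarrow> (nat \<Rightarrow> real \<Rightarrow> real^'d) \<Rightarrow> real \<Rightarrow> real"
  where "dv N v t = Max {norm (v i t - v j t) | i j. i \<in> {1..N} \<and> j \<in> {1..N}}"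

definition Gfun :: "nat \<Rightarrow> real \<Rightarrow> real \<Rightarrow> (nat \<Rightarrow> real \<Rightarrow> real^'d) \<Rightarrow> real \<Rightarrow> real"
  where "Gfun N \<tau> \<beta> v t = dv N v t + \<beta> * integral {max 0 (t - 2 * \<tau>)..t}
     (\<lambda>s. exp (-(t - s)) * integral {s..t}
        (\<lambda>r. Max ((\<lambda>i. norm (vector_derivative (v i) (at r within {0..}))) ` {1..N})))"

end

theory Submission
  imports Defs
begin

lemma nb_at0: "(r::real) \<ge> 0 \<Longrightarrow> at r within {0..} \<noteq> bot"
proof
  assume r: "r \<ge> 0" and b: "at r within {0..} = bot"
  have "at_right r \<le> at r within {0..}"
    using r by (intro at_le) auto
  with b have "at_right r \<le> (bot :: real filter)" by simp
  then show False using trivial_limit_at_right_real le_bot by metis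
qed

lemma cont_Max:
  fixes f :: "'a \<Rightarrow> real \<Rightarrow> real"
  assumes "finite A" "A \<noteq> {}" "\<And>a. a \<in> A \<Longrightarrow> continuous_on S (f a)"
  shows "continuous_on S (\<lambda>t. Max ((\<lambda>a. f a t) ` A))"
  using assms
proof (induction A rule: finite_ne_induct)
  case (singleton x)
  then show ?case by simp
next
  case (insert x F)
  have "continuous_on S (\<lambda>t. max (f x t) (Max ((\<lambda>a. f a t) ` F)))"
    using insert by (intro continuous_on_max) auto
  moreover have "\<And>t. Max ((\<lambda>a. f a t) ` insert x F) = max (f x t) (Max ((\<lambda>a. f a t) ` F))"
    using insert by simp
  ultimately show ?case by simp
qed

theorem lemma4p3:
  fixes N :: nat and \<sigma> \<tau> \<beta> :: real and \<psi> :: "real \<Rightarrow> real"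
    and x v :: "nat \<Rightarrow> real \<Rightarrow> real^'d"
  assumes "N \<ge> 2"
    and "0 \<le> \<sigma>" and "\<sigma> \<le> \<tau>"
    and "continuous_on {0..} \<psi>"
    and "\<And>r s. 0 \<le> r \<Longrightarrow> r \<le> s \<Longrightarrow> \<psi> s \<le> \<psi> r"
    and "\<And>r. 0 \<le> r \<Longrightarrow> 0 < \<psi> r"
    and "\<And>r. 0 \<le> r \<Longrightarrow> \<psi> r \<le> 1"
    and "cs_global_solution N \<sigma> \<tau> \<psi> x v"
    and "\<beta> > 0"
  shows "\<forall>i\<in>{1..N}. \<forall>j\<in>{1..N}. \<forall>t\<ge>2 * \<tau>.
     norm (v j (t - \<tau>) - v i (t - \<sigma>))
       \<le> dv N v (t - \<tau>) + integral {t - \<tau>..t - \<sigma>} (\<lambda>s. dv N v (s - \<tau>))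
          + (1 / \<beta>) * exp (2 * \<tau>) * Gfun N \<tau> \<beta> v (t - \<sigma>)"
proof (intro ballI allI impI)
  fix i j and t :: real
  assume i: "i \<in> {1..N}" and j: "j \<in> {1..N}" and t: "t \<ge> 2 * \<tau>"
  note sol = assms(8)[unfolded cs_global_solution_def]
  have "\<forall>i\<in>{1..N}. \<exists>v'. continuous_on {0..} v' \<and>
        (\<forall>t\<ge>0. (v i has_vector_derivative v' t) (at t within {0..}))"
    using sol by blast
  then obtain vd where vd: "\<And>i. i\<in>{1..N} \<Longrightarrow> continuous_on {0..} (vd i) \<and>
        (\<forall>t\<ge>0. (v i has_vector_derivative vd i t) (at t within {0..}))"
    by metis
  define M where "M = (\<lambda>r. Max ((\<lambda>i. norm (vector_derivative (v i) (at r within {0..}))) ` {1..N}))"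
  have VD: "vector_derivative (v i) (at r within {0..}) = vd i r" if "i \<in> {1..N}" "r \<ge> 0" for i r
    using vd[OF that(1)] that(2) nb_at0[OF that(2)] vector_derivative_within by blast
  have Meq: "M r = Max ((\<lambda>i. norm (vd i r)) ` {1..N})" if "r \<ge> 0" for r
    unfolding M_def using VD that by (intro arg_cong[where f=Max] image_cong) auto
  have Mcont: "continuous_on {0..} M"
  proof -
    have "continuous_on {0..} (\<lambda>r. Max ((\<lambda>i. norm (vd i r)) ` {1..N}))"
      using assms(1) vd by (intro cont_Max continuous_on_norm) auto
    then show ?thesis using Meq by (metis (no_types, lifting) atLeast_iff continuous_on_cong)
  qed
  have Mge: "norm (vd i r) \<le> M r" if "i \<in> {1..N}" "r \<ge> 0" for i r
    using Meq[OF that(2)] that(1) by simp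
  have Mnn: "0 \<le> M r" if "r \<ge> 0" for r
  proof -
    have "1 \<in> {1..N}" using assms(1) by simp
    then show ?thesis using order_trans[OF norm_ge_zero Mge[OF _ that]] by blast
  qed
  have Mint: "M integrable_on {a..b}" if "0 \<le> a" for a b
    using Mcont that by (intro integrable_continuous_interval) (auto intro: continuous_on_subset)
  have FTCb_aux: "(vd i has_integral (v i b - v i a)) {a..b}" if "i \<in> {1..N}" "0 \<le> a" "a \<le> b" for i a b
    proof (rule fundamental_theorem_of_calculus[OF that(3)])
      fix y assume y: "y \<in> {a..b}"
      then have "(v i has_vector_derivative vd i y) (at y within {0..})"
        using vd[OF that(1)] that by auto
      then show "(v i has_vector_derivative vd i y) (at y within {a..b})"
        by (rule has_vector_derivative_within_subset) (use that in auto)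
    qed
  have FTCb: "norm (v i b - v i a) \<le> integral {a..b} M" if "i \<in> {1..N}" "0 \<le> a" "a \<le> b" for i a b
  proof -
    have "(vd i has_integral (v i b - v i a)) {a..b}"
    proof (rule fundamental_theorem_of_calculus[OF that(3)])
      fix y assume y: "y \<in> {a..b}"
      then have "(v i has_vector_derivative vd i y) (at y within {0..})"
        using vd[OF that(1)] that by auto
      then show "(v i has_vector_derivative vd i y) (at y within {a..b})"
        by (rule has_vector_derivative_within_subset) (use that in auto)
    qed
    moreover have "vd i integrable_on {a..b}"
      using vd[OF that(1)] that by (intro integrable_continuous_interval) (auto intro: continuous_on_subset)
    ultimately have "norm (v i b - v i a) = norm (integral {a..b} (vd i))"
      by (simp add: integral_unique)
    also have "\<dots> \<le> integral {a..b} M"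
      using Mint[OF that(2)] \<open>vd i integrable_on {a..b}\<close> Mge[OF that(1)] that
      by (intro integral_norm_bound_integral) auto
    finally show ?thesis .
  qed

  have dveq: "dv N v s = Max ((\<lambda>p. norm (v (fst p) s - v (snd p) s)) ` ({1..N}\<times>{1..N}))" for s
  proof -
    have "{norm (v i s - v j s) |i j. i \<in> {1..N} \<and> j \<in> {1..N}}
        = (\<lambda>p. norm (v (fst p) s - v (snd p) s)) ` ({1..N}\<times>{1..N})"
    proof (rule set_eqI, rule iffI)
      fix z assume "z \<in> {norm (v i s - v j s) |i j. i \<in> {1..N} \<and> j \<in> {1..N}}"
      then obtain i j where "z = norm (v i s - v j s)" "i \<in> {1..N}" "j \<in> {1..N}" by blast
      then show "z \<in> (\<lambda>p. norm (v (fst p) s - v (snd p) s)) ` ({1..N}\<times>{1..N})"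
        by (intro image_eqI[where x="(i, j)"]) auto
    next
      fix z assume "z \<in> (\<lambda>p. norm (v (fst p) s - v (snd p) s)) ` ({1..N}\<times>{1..N})"
      then obtain p where "p \<in> {1..N}\<times>{1..N}" "z = norm (v (fst p) s - v (snd p) s)" by blast
      then show "z \<in> {norm (v i s - v j s) |i j. i \<in> {1..N} \<and> j \<in> {1..N}}"
        by (cases p) auto
    qed
    then show ?thesis unfolding dv_def by simp
  qed
  have dvge: "norm (v a s - v b s) \<le> dv N v s" if "a \<in> {1..N}" "b \<in> {1..N}" for a b s
    unfolding dveq using that by (intro Max_ge) (auto intro!: image_eqI[where x="(a, b)"])
  have dvnn: "0 \<le> dv N v s" for s
  proof -
    have "1 \<in> {1..N}" using assms(1) by simp
    then show ?thesis using order_trans[OF norm_ge_zero dvge] by blast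
  qed
  have dvcont: "continuous_on {-\<tau>..} (dv N v)"
  proof -
    have "continuous_on {-\<tau>..} (\<lambda>s. Max ((\<lambda>p. norm (v (fst p) s - v (snd p) s)) ` ({1..N}\<times>{1..N})))"
      using assms(1) sol by (intro cont_Max continuous_on_norm continuous_on_diff) auto
    then show ?thesis using dveq by simp
  qed
  define T where "T = t - \<sigma>"
  define F where "F = (\<lambda>u. integral {u..T} M)"
  define a where "a = max 0 (T - 2 * \<tau>)"
  have tau0: "0 \<le> \<tau>" using assms(2,3) by linarith
  have T0: "0 \<le> T" "t - \<tau> \<le> T" "\<tau> \<le> t - \<tau>" using t assms(2,3) tau0 unfolding T_def by linarith+
  have Fcont: "continuous_on {0..T} F"
    unfolding F_def using Mint[of 0 T] by (intro indefinite_integral_continuous_1') auto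
  have Fnn: "0 \<le> F u" if "0 \<le> u" for u
    unfolding F_def using Mint[OF that] Mnn that by (intro integral_nonneg) auto
  have hcont: "continuous_on {t - \<tau>..T} (\<lambda>s. dv N v (s - \<tau>) + F (s - \<tau>))"
  proof (intro continuous_on_add)
    show "continuous_on {t - \<tau>..T} (\<lambda>s. dv N v (s - \<tau>))"
      by (rule continuous_on_compose2[OF dvcont, of _ "\<lambda>s. s - \<tau>"])
         (use T0 tau0 in \<open>auto intro!: continuous_intros\<close>)
    show "continuous_on {t - \<tau>..T} (\<lambda>s. F (s - \<tau>))"
      by (rule continuous_on_compose2[OF Fcont, of _ "\<lambda>s. s - \<tau>"])
         (use T0 tau0 in \<open>auto intro!: continuous_intros\<close>)
  qed
  have hint: "(\<lambda>s. dv N v (s - \<tau>) + F (s - \<tau>)) integrable_on {t - \<tau>..T}"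
    using hcont by (rule integrable_continuous_interval)
  have d1int: "(\<lambda>s. dv N v (s - \<tau>)) integrable_on {t - \<tau>..T}"
    by (rule integrable_continuous_interval, rule continuous_on_compose2[OF dvcont, of _ "\<lambda>s. s - \<tau>"])
         (use T0 tau0 in \<open>auto intro!: continuous_intros\<close>)
  have d2int: "(\<lambda>s. F (s - \<tau>)) integrable_on {t - \<tau>..T}"
    by (rule integrable_continuous_interval, rule continuous_on_compose2[OF Fcont, of _ "\<lambda>s. s - \<tau>"])
         (use T0 tau0 in \<open>auto intro!: continuous_intros\<close>)
  have stepB: "norm (v i T - v i (t - \<tau>)) \<le> integral {t - \<tau>..T} (\<lambda>s. dv N v (s - \<tau>) + F (s - \<tau>))"
  proof (cases "t - \<tau> = T")
    case True
    then show ?thesis by simp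
  next
    case False
    then have tpos: "\<tau> > 0" using T0 assms(2,3) unfolding T_def by linarith
    have pw: "norm (vd i s) \<le> dv N v (s - \<tau>) + F (s - \<tau>)" if s: "s \<in> {t - \<tau>..T}" for s
    proof -
      have s0: "s > 0" using s T0 tpos by auto
      define W where "W = (\<Sum>k\<in>{1..N} - {i}. cs_weight N \<psi> \<sigma> \<tau> x i k s *\<^sub>R (v k (s - \<tau>) - v i (s - \<sigma>)))"
      have "(v i has_vector_derivative W) (at s)"
        using sol i s0 unfolding W_def by blast
      then have "(v i has_vector_derivative W) (at s within {0..})"
        by (rule has_vector_derivative_at_within)
      then have vdW: "vd i s = W"
        using vd[OF i] s0 nb_at0[of s] vector_derivative_unique_within by (meson less_imp_le)
      define X where "X = dv N v (s - \<tau>) + norm (v i (s - \<sigma>) - v i (s - \<tau>))"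
      have Nm: "real N - 1 > 0" using assms(1) by simp
      have "norm W \<le> (\<Sum>k\<in>{1..N} - {i}. norm (cs_weight N \<psi> \<sigma> \<tau> x i k s *\<^sub>R (v k (s - \<tau>) - v i (s - \<sigma>))))"
        unfolding W_def by (rule norm_sum)
      also have "\<dots> \<le> (\<Sum>k\<in>{1..N} - {i}. (1 / (real N - 1)) * X)"
      proof (intro sum_mono)
        fix k assume k: "k \<in> {1..N} - {i}"
        have w0: "0 \<le> cs_weight N \<psi> \<sigma> \<tau> x i k s" and w1: "cs_weight N \<psi> \<sigma> \<tau> x i k s \<le> 1 / (real N - 1)"
          unfolding cs_weight_def using assms(6,7)[of "norm (x i (s - \<sigma>) - x k (s - \<tau>))"] Nm
          by (auto simp: less_imp_le divide_le_cancel)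
        have "norm (v k (s - \<tau>) - v i (s - \<sigma>)) \<le> norm (v k (s - \<tau>) - v i (s - \<tau>)) + norm (v i (s - \<tau>) - v i (s - \<sigma>))"
          using norm_triangle_ineq[of "v k (s - \<tau>) - v i (s - \<tau>)" "v i (s - \<tau>) - v i (s - \<sigma>)"] by simp
        also have "\<dots> \<le> X" unfolding X_def using dvge[of k i "s - \<tau>"] k i
          by (simp add: norm_minus_commute)
        finally have nX: "norm (v k (s - \<tau>) - v i (s - \<sigma>)) \<le> X" .
        have "norm (cs_weight N \<psi> \<sigma> \<tau> x i k s *\<^sub>R (v k (s - \<tau>) - v i (s - \<sigma>)))
            = cs_weight N \<psi> \<sigma> \<tau> x i k s * norm (v k (s - \<tau>) - v i (s - \<sigma>))"
          using w0 by simp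
        also have "\<dots> \<le> (1 / (real N - 1)) * X"
          using w0 w1 nX Nm assms(1) by (intro mult_mono) auto
        finally show "norm (cs_weight N \<psi> \<sigma> \<tau> x i k s *\<^sub>R (v k (s - \<tau>) - v i (s - \<sigma>))) \<le> (1 / (real N - 1)) * X" .
      qed
      also have "\<dots> = X"
      proof -
        have "card ({1..N} - {i}) = N - 1" using i by simp
        then have "real (card ({1..N} - {i})) = real N - 1" using assms(1) by simp
        then show ?thesis using Nm by simp
      qed
      also have "\<dots> \<le> dv N v (s - \<tau>) + F (s - \<tau>)"
      proof -
        have "norm (v i (s - \<sigma>) - v i (s - \<tau>)) \<le> integral {s - \<tau>..s - \<sigma>} M"
          using FTCb[OF i, of "s - \<tau>" "s - \<sigma>"] s T0 assms(3) by auto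
        also have "\<dots> \<le> integral {s - \<tau>..T} M"
          using s T0 assms(2,3) Mint[of "s - \<tau>"] Mnn
          by (intro integral_subset_le) (auto simp: T_def)
        finally show ?thesis unfolding X_def F_def by simp
      qed
      finally show ?thesis using vdW by simp
    qed
    have "(vd i has_integral (v i T - v i (t - \<tau>))) {t - \<tau>..T}"
      by (rule FTCb_aux[OF i _ T0(2)]) (use T0(3) tau0 in linarith)
    moreover have "vd i integrable_on {t - \<tau>..T}"
      using vd[OF i] T0 tau0 by (intro integrable_continuous_interval) (auto intro: continuous_on_subset)
    ultimately have "norm (v i T - v i (t - \<tau>)) = norm (integral {t - \<tau>..T} (vd i))"
      by (simp add: integral_unique)
    also have "\<dots> \<le> integral {t - \<tau>..T} (\<lambda>s. dv N v (s - \<tau>) + F (s - \<tau>))"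
      using hint \<open>vd i integrable_on {t - \<tau>..T}\<close> pw
      by (intro integral_norm_bound_integral) auto
    finally show ?thesis .
  qed
  have splitI: "integral {t - \<tau>..T} (\<lambda>s. dv N v (s - \<tau>) + F (s - \<tau>))
      = integral {t - \<tau>..T} (\<lambda>s. dv N v (s - \<tau>)) + integral {t - \<tau>..T} (\<lambda>s. F (s - \<tau>))"
    using d1int d2int by (rule integral_add)
  have shiftI: "integral {t - \<tau>..T} (\<lambda>s. F (s - \<tau>)) = integral {t - 2 * \<tau>..T - \<tau>} F"
    using integral_shift_real_ivl[where f=F and a="t - 2 * \<tau>" and c="-\<tau>" and b="T - \<tau>"]
    by (simp add: algebra_simps)
  have aprops: "0 \<le> a" "a \<le> t - 2 * \<tau>" "T - \<tau> \<le> T" "a \<le> T" "T - 2 * \<tau> \<le> a"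
    using t tau0 assms(2,3) T0 unfolding a_def T_def by auto
  have Fint: "F integrable_on {c..d}" if "0 \<le> c" "d \<le> T" for c d
    by (rule integrable_continuous_interval, rule continuous_on_subset[OF Fcont]) (use that in auto)
  have stepD: "integral {t - 2 * \<tau>..T - \<tau>} F \<le> integral {a..T} F"
    using aprops Fint Fnn by (intro integral_subset_le) auto
  have stepE: "integral {a..T} F \<le> exp (2 * \<tau>) * integral {a..T} (\<lambda>s. exp (-(T - s)) * F s)"
  proof -
    have eint: "(\<lambda>s. exp (-(T - s)) * F s) integrable_on {a..T}"
      by (rule integrable_continuous_interval, intro continuous_intros continuous_on_subset[OF Fcont])
         (use aprops in auto)
    have "integral {a..T} F \<le> integral {a..T} (\<lambda>s. exp (2 * \<tau>) * (exp (-(T - s)) * F s))"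
    proof (intro integral_le)
      show "F integrable_on {a..T}" using Fint aprops by auto
      show "(\<lambda>s. exp (2 * \<tau>) * (exp (-(T - s)) * F s)) integrable_on {a..T}"
        using eint by (rule integrable_on_mult_right)
      fix s assume s: "s \<in> {a..T}"
      have "exp (2 * \<tau>) * exp (-(T - s)) = exp (2 * \<tau> - (T - s))" by (simp add: exp_add[symmetric])
      also have "\<dots> \<ge> 1" using s aprops by simp
      finally have "1 \<le> exp (2 * \<tau>) * exp (-(T - s))" .
      then have "1 * F s \<le> (exp (2 * \<tau>) * exp (-(T - s))) * F s"
        using Fnn[of s] s aprops by (intro mult_right_mono) auto
      then show "F s \<le> exp (2 * \<tau>) * (exp (-(T - s)) * F s)" by (simp add: mult.assoc)
    qed
    also have "\<dots> = exp (2 * \<tau>) * integral {a..T} (\<lambda>s. exp (-(T - s)) * F s)"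
      by (rule integral_mult_right)
    finally show ?thesis .
  qed
  have Geq: "Gfun N \<tau> \<beta> v T = dv N v T + \<beta> * integral {a..T} (\<lambda>s. exp (-(T - s)) * F s)"
    unfolding Gfun_def F_def a_def M_def by simp
  have stepF: "exp (2 * \<tau>) * integral {a..T} (\<lambda>s. exp (-(T - s)) * F s) \<le> (1 / \<beta>) * exp (2 * \<tau>) * Gfun N \<tau> \<beta> v T"
  proof -
    have "(1 / \<beta>) * exp (2 * \<tau>) * Gfun N \<tau> \<beta> v T
        = (1 / \<beta>) * exp (2 * \<tau>) * dv N v T + exp (2 * \<tau>) * integral {a..T} (\<lambda>s. exp (-(T - s)) * F s)"
      unfolding Geq using assms(9) by (simp add: field_simps)
    moreover have "0 \<le> (1 / \<beta>) * exp (2 * \<tau>) * dv N v T" using assms(9) dvnn by simp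
    ultimately show ?thesis by linarith
  qed
  have "norm (v j (t - \<tau>) - v i T) \<le> norm (v j (t - \<tau>) - v i (t - \<tau>)) + norm (v i T - v i (t - \<tau>))"
    using norm_triangle_ineq[of "v j (t - \<tau>) - v i (t - \<tau>)" "v i (t - \<tau>) - v i T"]
    by (simp add: norm_minus_commute)
  also have "\<dots> \<le> dv N v (t - \<tau>) + (integral {t - \<tau>..T} (\<lambda>s. dv N v (s - \<tau>)) + integral {t - \<tau>..T} (\<lambda>s. F (s - \<tau>)))"
    using dvge[OF j i] stepB splitI by (intro add_mono) auto
  finally show "norm (v j (t - \<tau>) - v i (t - \<sigma>))
       \<le> dv N v (t - \<tau>) + integral {t - \<tau>..t - \<sigma>} (\<lambda>s. dv N v (s - \<tau>))
          + (1 / \<beta>) * exp (2 * \<tau>) * Gfun N \<tau> \<beta> v (t - \<sigma>)"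
    using shiftI stepD stepE stepF unfolding T_def by linarith
qed
end
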